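(* Let $F(X)=c_0+c_1X+\cdots+c_{d-1}X^{d-1}+X^d\in\mathbb{Z}[X]$ be monic irreducible, $\xi$ a fixed root, and $L=\mathbb{Q}(\xi)$ Galois over $\mathbb{Q}$ of degree $d$ with $G=\mathrm{Gal}(L/\mathbb{Q})$. Assume $\{\sigma\xi\}_{\sigma\in G}$ is a normal basis of $L/\mathbb{Q}$. Let $K_1,\dots,K_r$ be the conjugacy classes of $G$ and let $(a_{K_j,i})_{i\ge0}$ be the sequence with characteristic polynomial $F$ whose first $d$ terms are the $j$-th column of $P\Gamma_\xi^{-1}\kappa$, where $P=[\sigma^{-1}(\xi^{i-1})]_{1\le i\le d,\sigma\in G}$, $\Gamma_\xi=[\sigma\tau^{-1}(\xi)]_{\sigma,\tau\in G}$, and $\kappa=[\kappa_{\tau,j}]_{\tau\in G,1\le j\le r}$ with $\kappa_{\tau,j}=1$ if $\tau\in K_j$ and $0$ otherwise. Let $\{X_\sigma\}_{\sigma\in G}$ be indeterminates, $\Gamma=[X_{\sigma\tau^{-1}}]_{\sigma,\tau\in G}$ the group matrix, and $\partial_\tau=\frac{1}{|G|}\frac{\partial\det\Gamma}{\partial X_\tau}$. Denote by $\partial_\tau(\xi)$ and $\det\Gamma_\xi$ the values obtained by substituting $X_\sigma\mapsto\sigma\xi$ for all $\sigma$. Then for every integer $i\ge0$, $$a_{K_j,i}=\frac{1}{\det\Gamma_\xi}\sum_{\sigma\in G}\sum_{\tau\in K_j}\sigma(\xi^i)\,\partial_{\sigma\tau}(\xi).$$ Moreover, regard $G$ as a subgroup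 of the symmetric group $S_d$ via its (simply transitive) action on the $d$ roots $\{\sigma\xi\}$ of $F$. If $G\subset A_d$, then $$a_{K_j,i}=\frac{1}{\det\Gamma_\xi}\mathrm{Tr}_G\Big(\xi^i\sum_{\tau\in K_j}\partial_\tau(\xi)\Big).$$ If $G\not\subset A_d$, set $G^+=G\cap A_d$ and choose $\delta\in G$ with $G=G^+\sqcup\delta G^+$; then $$a_{K_j,i}=\frac{1}{\det\Gamma_\xi}\big(\mathrm{Tr}_{G^+}-\delta\circ\mathrm{Tr}_{G^+}\big)\Big(\xi^i\sum_{\tau\in K_j}\partial_\tau(\xi)\Big).$$
   Context: Matrices indexed by $G$ use a fixed total order on $G$. A sequence $(a_i)$ has characteristic polynomial $F$ if $a_{n+d}=-\sum_{k=0}^{d-1}c_ka_{n+k}$ for all $n\ge0$. For a subgroup $H\le G$, $\mathrm{Tr}_H(x)=\sum_{h\in H}h(x)$ for $x\in L$. *)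

theory Defs
  imports "Jordan_Normal_Form.Gauss_Jordan_Elimination" "Jordan_Normal_Form.Determinant"
    "HOL-Combinatorics.Permutations"
begin

text \<open>Field automorphisms of the (field) type 'a. When 'a is Q(xi), this is Gal(L/Q).\<close>
definition field_auts :: "('a::field_char_0 \<Rightarrow> 'a) set" where
  "field_auts = {s. bij s \<and> (\<forall>x y. s (x + y) = s x + s y) \<and> (\<forall>x y. s (x * y) = s x * s y)
                 \<and> s 1 = 1}"

definition normal_basis :: "('a::field_char_0 \<Rightarrow> 'a) set \<Rightarrow> 'a \<Rightarrow> bool" where
  "normal_basis G xi \<longleftrightarrow>
     (\<forall>c :: ('a \<Rightarrow> 'a) \<Rightarrow> rat. (\<Sum>s\<in>G. of_rat (c s) * s xi) = 0 \<longrightarrow> (\<forall>s\<in>G. c s = 0)) \<and>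
     (\<forall>x. \<exists>c :: ('a \<Rightarrow> 'a) \<Rightarrow> rat. x = (\<Sum>s\<in>G. of_rat (c s) * s xi))"

text \<open>Matrices indexed by G, using the total order of G given by the enumeration e of G.\<close>
definition Gamma_xi :: "nat \<Rightarrow> (nat \<Rightarrow> 'a \<Rightarrow> 'a) \<Rightarrow> 'a \<Rightarrow> 'a::field mat" where
  "Gamma_xi d e xi = mat d d (\<lambda>(i,k). (e i \<circ> inv_into UNIV (e k)) xi)"

definition P_mat :: "nat \<Rightarrow> (nat \<Rightarrow> 'a \<Rightarrow> 'a) \<Rightarrow> 'a \<Rightarrow> 'a::field mat" where
  "P_mat d e xi = mat d d (\<lambda>(i,k). inv_into UNIV (e k) (xi ^ i))"

definition kappa_col :: "nat \<Rightarrow> (nat \<Rightarrow> 'a \<Rightarrow> 'a) \<Rightarrow> ('a \<Rightarrow> 'a) set \<Rightarrow> 'a::field vec" where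
  "kappa_col d e K = vec d (\<lambda>k. if e k \<in> K then 1 else 0)"

text \<open>Formal partial derivative of det of the group matrix [X_{s t^-1}] w.r.t. X_tau, evaluated
  at X_s := x s: the coefficient of T in det Gamma(x + T e_tau) (Taylor expansion).\<close>
definition ddet_group :: "nat \<Rightarrow> (nat \<Rightarrow> 'a \<Rightarrow> 'a) \<Rightarrow> ('a \<Rightarrow> 'a) \<Rightarrow> (('a \<Rightarrow> 'a) \<Rightarrow> 'a) \<Rightarrow> 'a::field" where
  "ddet_group d e tau x = coeff (det (mat d d (\<lambda>(i,k).
       [: x (e i \<circ> inv_into UNIV (e k)) :] + (if e i \<circ> inv_into UNIV (e k) = tau then [:0, 1:] else 0)))) 1"

definition partial_xi :: "nat \<Rightarrow> (nat \<Rightarrow> 'a \<Rightarrow> 'a) \<Rightarrow> ('a \<Rightarrow> 'a) \<Rightarrow> 'a \<Rightarrow> 'a::field" where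
  "partial_xi d e tau xi = ddet_group d e tau (\<lambda>s. s xi) / of_nat d"

definition trace_on :: "('a \<Rightarrow> 'a) set \<Rightarrow> 'a \<Rightarrow> 'a::comm_monoid_add" where
  "trace_on H x = (\<Sum>h\<in>H. h x)"

definition root_perm :: "('a \<Rightarrow> 'a) set \<Rightarrow> 'a \<Rightarrow> ('a \<Rightarrow> 'a) \<Rightarrow> 'a \<Rightarrow> 'a" where
  "root_perm G xi s = (\<lambda>y. if y \<in> (\<lambda>r. r xi) ` G then s y else y)"

definition even_part :: "('a \<Rightarrow> 'a) set \<Rightarrow> 'a \<Rightarrow> ('a \<Rightarrow> 'a) set" where
  "even_part G xi = {s \<in> G. evenperm (root_perm G xi s)}"

end

theory Submission
  imports Defs
begin

lemma aut_fh: assumes "s \<in> field_auts" shows "field_hom s"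
proof -
  from assms have a: "\<And>x y. s (x + y) = s x + s y" "\<And>x y. s (x*y) = s x * s y" "s 1 = 1"
    by (auto simp: field_auts_def)
  have z: "s 0 = 0" using a(1)[of 0 0] by simp
  show ?thesis by (unfold_locales) (auto simp: a z)
qed

lemma aut_bij: "s \<in> field_auts \<Longrightarrow> bij s" by (simp add: field_auts_def)

lemma aut_of_rat: assumes "s \<in> field_auts" shows "s (of_rat q) = of_rat q"
proof -
  interpret field_hom s by (rule aut_fh[OF assms])
  obtain a b where q: "q = Rat.Fract a b" "b > 0" by (cases q) auto
  have "of_rat q = (of_int a / of_int b :: 'a)" using q by (simp add: of_rat_rat)
  then show ?thesis by (simp add: hom_distribs)
qed

lemma aut_comp: assumes "s \<in> field_auts" "t \<in> field_auts" shows "s \<circ> t \<in> field_auts"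
  using assms by (auto simp: field_auts_def intro: bij_comp)

lemma aut_id: "id \<in> field_auts" by (simp add: field_auts_def)

lemma aut_inv: assumes "s \<in> field_auts" shows "inv_into UNIV s \<in> field_auts"
proof -
  have b: "bij s" using assms by (simp add: field_auts_def)
  have a: "\<And>x y. s (x + y) = s x + s y" "\<And>x y. s (x*y) = s x * s y" "s 1 = 1"
    using assms by (auto simp: field_auts_def)
  let ?i = "inv_into UNIV s"
  have si: "\<And>x. s (?i x) = x" using b by (simp add: bij_def surj_f_inv_f)
  have isx: "\<And>x. ?i (s x) = x" using b by (simp add: bij_def inv_f_f)
  have "?i (x + y) = ?i x + ?i y" for x y
    by (metis a(1) si isx)
  moreover have "?i (x * y) = ?i x * ?i y" for x y
    by (metis a(2) si isx)
  moreover have "?i 1 = 1" by (metis a(3) isx)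
  moreover have "bij ?i" using b by (simp add: bij_imp_bij_inv)
  ultimately show ?thesis by (simp add: field_auts_def)
qed

lemma aut_inv_l: "s \<in> field_auts \<Longrightarrow> inv_into UNIV s \<circ> s = id"
  by (simp add: field_auts_def bij_def)
lemma aut_inv_r: "s \<in> field_auts \<Longrightarrow> s \<circ> inv_into UNIV s = id"
  by (simp add: field_auts_def bij_def surj_iff)
lemma aut_inv_inv: "s \<in> field_auts \<Longrightarrow> inv_into UNIV (inv_into UNIV s) = s"
  by (simp add: field_auts_def inv_inv_eq)
lemma aut_inv_comp: "s \<in> field_auts \<Longrightarrow> t \<in> field_auts \<Longrightarrow>
   inv_into UNIV (s \<circ> t) = inv_into UNIV t \<circ> inv_into UNIV s"
  by (simp add: field_auts_def o_inv_distrib)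

lemma dedekind:
  assumes "finite S" "S \<subseteq> field_auts"
    and "\<forall>x::'a::field_char_0. (\<Sum>s\<in>S. w s * s x) = 0"
  shows "\<forall>s\<in>S. w s = 0"
  using assms
proof (induction "card S" arbitrary: S w rule: less_induct)
  case less
  show ?case
  proof (rule ccontr)
    assume "\<not> (\<forall>s\<in>S. w s = 0)"
    then obtain s1 where s1: "s1 \<in> S" "w s1 \<noteq> 0" by auto
    show False
    proof (cases "\<exists>s2\<in>S. s2 \<noteq> s1 \<and> w s2 \<noteq> 0")
      case False
      have one: "s 1 = 1" if "s \<in> S" for s using that less.prems(2) by (auto simp: field_auts_def)
      have "(\<Sum>s\<in>S. w s * s 1) = w s1 * s1 1 + (\<Sum>s\<in>S-{s1}. w s * s 1)"
        using s1 less.prems(1) by (simp add: sum.remove)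
      also have "(\<Sum>s\<in>S-{s1}. w s * s 1) = 0" using False by (intro sum.neutral) auto
      finally have "w s1 = 0" using less.prems(3) one[OF s1(1)] by simp
      with s1 show False by simp
    next
      case True
      then obtain s2 where s2: "s2 \<in> S" "s2 \<noteq> s1" "w s2 \<noteq> 0" by auto
      then obtain y where y: "s1 y \<noteq> s2 y" by (metis ext)
      define w' where "w' = (\<lambda>s. w s * (s y - s1 y))"
      have mul: "s (y * x) = s y * s x" if "s \<in> S" for s x
        using that less.prems(2) by (auto simp: field_auts_def)
      have rel: "(\<Sum>s\<in>S. w' s * s x) = 0" for x
      proof -
        have "(\<Sum>s\<in>S. w' s * s x) = (\<Sum>s\<in>S. w s * s (y * x)) - (\<Sum>s\<in>S. s1 y * (w s * s x))"
          unfolding sum_subtractf[symmetric]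
        proof (intro sum.cong refl)
          fix s assume "s \<in> S"
          from mul[OF this, of x] show "w' s * s x = w s * s (y * x) - s1 y * (w s * s x)"
            by (simp add: w'_def algebra_simps)
        qed
        also have "\<dots> = (\<Sum>s\<in>S. w s * s (y * x)) - s1 y * (\<Sum>s\<in>S. w s * s x)"
          by (simp add: sum_distrib_left)
        also have "\<dots> = 0" using less.prems(3) by simp
        finally show ?thesis .
      qed
      have rel': "\<forall>x. (\<Sum>s\<in>S-{s1}. w' s * s x) = 0"
      proof
        fix x
        have "(\<Sum>s\<in>S. w' s * s x) = w' s1 * s1 x + (\<Sum>s\<in>S-{s1}. w' s * s x)"
          using s1 less.prems(1) by (simp add: sum.remove)
        then show "(\<Sum>s\<in>S-{s1}. w' s * s x) = 0" using rel[of x] by (simp add: w'_def)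
      qed
      have "card (S - {s1}) < card S" using s1 less.prems(1) by (meson card_Diff1_less)
      from less.hyps[OF this _ _ rel'] less.prems have "\<forall>s\<in>S-{s1}. w' s = 0" by auto
      with s2 have "w s2 * (s2 y - s1 y) = 0" by (auto simp: w'_def)
      with s2 y show False by simp
    qed
  qed
qed

lemma inv_unique_mat:
  fixes A B B' :: "'a::field mat"
  assumes "A \<in> carrier_mat n n" "B \<in> carrier_mat n n" "B' \<in> carrier_mat n n"
    "B * A = 1\<^sub>m n" "A * B' = 1\<^sub>m n"
  shows "B' = B"
proof -
  have "B' = (B * A) * B'" by (metis assms(3,4) left_mult_one_mat)
  also have "\<dots> = B * (A * B')" by (rule assoc_mult_mat[OF assms(2,1,3)])
  also have "\<dots> = B" by (metis assms(2,5) right_mult_one_mat)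
  finally show ?thesis .
qed

lemma perm_invariant_inverse:
  fixes A B :: "'a::field mat"
  assumes A: "A \<in> carrier_mat n n" and B: "B \<in> carrier_mat n n"
    and AB: "A * B = 1\<^sub>m n" and BA: "B * A = 1\<^sub>m n"
    and p: "bij_betw p {0..<n} {0..<n}"
    and inv: "\<And>i k. i < n \<Longrightarrow> k < n \<Longrightarrow> A $$ (p i, p k) = A $$ (i, k)"
    and i: "i < n" and k: "k < n"
  shows "B $$ (p i, p k) = B $$ (i, k)"
proof -
  have pl: "j < n \<Longrightarrow> p j < n" for j using p by (auto simp: bij_betw_def)
  have pinj: "j < n \<Longrightarrow> l < n \<Longrightarrow> p j = p l \<longleftrightarrow> j = l" for j l
    using p by (auto simp: bij_betw_def inj_on_def)
  define B' where "B' = mat n n (\<lambda>(i,k). B $$ (p i, p k))"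
  have B': "B' \<in> carrier_mat n n" by (simp add: B'_def)
  have "A * B' = 1\<^sub>m n"
  proof (rule eq_matI)
    fix i k assume ik: "i < dim_row (1\<^sub>m n :: 'a mat)" "k < dim_col (1\<^sub>m n :: 'a mat)"
    hence ik: "i < n" "k < n" by auto
    have "(A * B') $$ (i,k) = (\<Sum>j = 0..<n. A $$ (i,j) * B $$ (p j, p k))"
      using A ik by (simp add: B'_def scalar_prod_def)
    also have "\<dots> = (\<Sum>j = 0..<n. A $$ (p i, p j) * B $$ (p j, p k))"
      using ik inv by simp
    also have "\<dots> = (\<Sum>j = 0..<n. A $$ (p i, j) * B $$ (j, p k))"
      using sum.reindex_bij_betw[OF p, of "\<lambda>j. A $$ (p i, j) * B $$ (j, p k)"] by simp
    also have "\<dots> = (A * B) $$ (p i, p k)"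
      using A B ik pl by (simp add: scalar_prod_def)
    also have "\<dots> = 1\<^sub>m n $$ (i, k)" using AB ik pl pinj by simp
    finally show "(A * B') $$ (i,k) = 1\<^sub>m n $$ (i, k)" .
  qed (use A B' in auto)
  hence "B' = B" using inv_unique_mat[OF A B B' BA] by simp
  thus ?thesis using i k by (metis B'_def index_mat(1) case_prod_conv)
qed

lemma rowperm_inverse:
  fixes A B A' :: "'a::field mat"
  assumes A: "A \<in> carrier_mat n n" and B: "B \<in> carrier_mat n n"
    and AB: "A * B = 1\<^sub>m n" and A': "A' \<in> carrier_mat n n"
    and p: "bij_betw p {0..<n} {0..<n}"
    and rel: "\<And>i k. i < n \<Longrightarrow> k < n \<Longrightarrow> A' $$ (i, k) = A $$ (p i, k)"
  shows "A' * mat n n (\<lambda>(k,j). B $$ (k, p j)) = 1\<^sub>m n"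
proof (rule eq_matI)
  have pl: "j < n \<Longrightarrow> p j < n" for j using p by (auto simp: bij_betw_def)
  have pinj: "j < n \<Longrightarrow> l < n \<Longrightarrow> p j = p l \<longleftrightarrow> j = l" for j l
    using p by (auto simp: bij_betw_def inj_on_def)
  fix i k assume ik: "i < dim_row (1\<^sub>m n :: 'a mat)" "k < dim_col (1\<^sub>m n :: 'a mat)"
  hence ik: "i < n" "k < n" by auto
  have "(A' * mat n n (\<lambda>(k,j). B $$ (k, p j))) $$ (i,k) = (\<Sum>j = 0..<n. A $$ (p i, j) * B $$ (j, p k))"
    using A' ik by (simp add: scalar_prod_def rel)
  also have "\<dots> = (A * B) $$ (p i, p k)"
    using A B ik pl by (simp add: scalar_prod_def)
  also have "\<dots> = 1\<^sub>m n $$ (i, k)" using AB ik pl pinj by simp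
  finally show "(A' * mat n n (\<lambda>(k,j). B $$ (k, p j))) $$ (i,k) = 1\<^sub>m n $$ (i, k)" .
qed (use A' in auto)

lemma coeff_prod_lin:
  assumes "finite S"
  shows "coeff (\<Prod>i\<in>S. [:1, c i:]) 0 = (1::'a::comm_ring_1) \<and> coeff (\<Prod>i\<in>S. [:1, c i:]) 1 = (\<Sum>i\<in>S. c i)"
  using assms by (induction S rule: finite_induct) (auto simp: coeff_pCons split: nat.splits)

lemma coeff_det_lin:
  fixes N :: "'a::field mat"
  assumes N: "N \<in> carrier_mat n n"
  shows "coeff (det (mat n n (\<lambda>(i,k). [:(if i = k then 1 else 0), N $$ (i,k):]))) 1 = (\<Sum>i = 0..<n. N $$ (i,i))"
proof -
  define Q where "Q = mat n n (\<lambda>(i,k). [:(if i = k then 1 else 0), N $$ (i,k):])"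
  have Q: "Q \<in> carrier_mat n n" by (simp add: Q_def)
  let ?P = "{p. p permutes {0..<n}}"
  define f where "f = (\<lambda>p. coeff (signof p * (\<Prod>i = 0..<n. Q $$ (i, p i))) 1)"
  have fin: "finite ?P" by (simp add: finite_permutations)
  have "coeff (det Q) 1 = (\<Sum>p\<in>?P. f p)"
    unfolding det_def'[OF Q] f_def by (simp add: coeff_sum)
  also have "\<dots> = f id + (\<Sum>p\<in>?P - {id}. f p)"
    using fin by (simp add: sum.remove permutes_id)
  also have "(\<Sum>p\<in>?P - {id}. f p) = 0"
  proof (rule sum.neutral, rule ballI)
    fix p assume p: "p \<in> ?P - {id}"
    hence pp: "p permutes {0..<n}" and pid: "p \<noteq> id" by auto
    then obtain i where i: "p i \<noteq> i" by (metis eq_id_iff)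
    have iS: "i \<in> {0..<n}" using pp i by (meson permutes_not_in)
    define j where "j = p i"
    have jS: "j \<in> {0..<n}" using pp iS by (simp add: j_def permutes_in_image)
    have ji: "j \<noteq> i" using i by (simp add: j_def)
    have pj: "p j \<noteq> j" using i pp by (metis j_def permutes_inj injD)
    have "(\<Prod>k = 0..<n. Q $$ (k, p k)) = Q $$ (i, p i) * (Q $$ (j, p j) * (\<Prod>k\<in>{0..<n} - {i} - {j}. Q $$ (k, p k)))"
      using iS jS ji by (simp add: prod.remove[of "{0..<n}" i] prod.remove[of "{0..<n} - {i}" j])
    also have "Q $$ (i, p i) = pCons 0 [:N $$ (i, p i):]" using iS i pp
      by (simp add: Q_def permutes_in_image)
    also have "Q $$ (j, p j) = pCons 0 [:N $$ (j, p j):]" using jS pj pp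
      by (simp add: Q_def permutes_in_image)
    finally show "f p = 0" unfolding f_def of_int_poly by simp
  qed
  also have "f id = (\<Sum>i = 0..<n. N $$ (i,i))"
  proof -
    have "(\<Prod>i = 0..<n. Q $$ (i, id i)) = (\<Prod>i = 0..<n. [:1, N $$ (i,i):])"
      by (intro prod.cong refl) (simp add: Q_def)
    then show ?thesis unfolding f_def using coeff_prod_lin[of "{0..<n}" "\<lambda>i. N $$ (i,i)"] by simp
  qed
  finally show ?thesis by (simp add: Q_def)
qed

lemma sum_pCons2: "finite S \<Longrightarrow> (\<Sum>j\<in>S. [:f j, g j:]) = [:(\<Sum>j\<in>S. f j), (\<Sum>j\<in>S. g j):]"
  by (induction S rule: finite_induct) auto

locale gs =
  fixes d :: nat and e :: "nat \<Rightarrow> 'a::field_char_0 \<Rightarrow> 'a" and xi :: 'a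
  assumes order: "bij_betw e {..<d} field_auts"
    and span: "\<forall>x. \<exists>c::('a\<Rightarrow>'a)\<Rightarrow>rat. x = (\<Sum>s\<in>field_auts. of_rat (c s) * s xi)"
    and gen: "\<forall>x::'a. \<exists>p::rat poly. x = poly (map_poly of_rat p) xi"
begin

abbreviation "G \<equiv> (field_auts :: ('a\<Rightarrow>'a) set)"
definition ix where "ix = the_inv_into {..<d} e"
abbreviation "iv s \<equiv> inv_into UNIV s"
abbreviation "A \<equiv> Gamma_xi d e xi"

lemma finG: "finite G" using order bij_betw_finite by blast
lemma eG: "i < d \<Longrightarrow> e i \<in> G" using order by (auto simp: bij_betw_def)
lemma ix_lt: "s \<in> G \<Longrightarrow> ix s < d"
  unfolding ix_def using order by (metis bij_betw_def lessThan_iff the_inv_into_into subset_refl)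
lemma e_ix: "s \<in> G \<Longrightarrow> e (ix s) = s"
  unfolding ix_def using order by (metis bij_betw_def f_the_inv_into_f)
lemma ix_e: "i < d \<Longrightarrow> ix (e i) = i"
  unfolding ix_def using order by (metis bij_betw_def lessThan_iff the_inv_into_f_f)
lemma e_inj: "i < d \<Longrightarrow> k < d \<Longrightarrow> e i = e k \<longleftrightarrow> i = k"
  by (metis ix_e)

lemma sumG: "(\<Sum>i = 0..<d. f (e i)) = (\<Sum>s\<in>G. f s)"
  using sum.reindex_bij_betw[OF order, of f] by (simp add: atLeast0LessThan)
lemma sumG': "(\<Sum>i<d. f (e i)) = (\<Sum>s\<in>G. f s)"
  using sum.reindex_bij_betw[OF order, of f] by simp

lemma A_carrier: "A \<in> carrier_mat d d" by (simp add: Gamma_xi_def)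
lemma A_entry: "i < d \<Longrightarrow> k < d \<Longrightarrow> A $$ (i,k) = (e i \<circ> iv (e k)) xi"
  by (simp add: Gamma_xi_def)

lemma aut_sum_rat: assumes "s \<in> G"
  shows "s (\<Sum>t\<in>G. of_rat (c t) * t xi) = (\<Sum>t\<in>G. of_rat (c t) * s (t xi))"
proof -
  interpret field_hom s by (rule aut_fh[OF assms])
  show ?thesis by (simp add: hom_distribs aut_of_rat[OF assms])
qed

lemma detA_nz: "det A \<noteq> 0"
proof
  assume "det A = 0"
  hence "det (transpose_mat A) = 0" using det_transpose[OF A_carrier] by simp
  moreover have "transpose_mat A \<in> carrier_mat d d" using A_carrier by simp
  ultimately obtain v where v: "v \<in> carrier_vec d" "v \<noteq> 0\<^sub>v d" "transpose_mat A *\<^sub>v v = 0\<^sub>v d"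
    using det_0_iff_vec_prod_zero_field by blast
  define w where "w = (\<lambda>s. v $ ix s)"
  have r1: "(\<Sum>s\<in>G. w s * s (t xi)) = 0" if t: "t \<in> G" for t
  proof -
    define k where "k = ix (iv t)"
    have ivt: "iv t \<in> G" using aut_inv[OF t] .
    have k: "k < d" "e k = iv t" using ix_lt[OF ivt] e_ix[OF ivt] by (auto simp: k_def)
    have "0 = (transpose_mat A *\<^sub>v v) $ k" using v k by simp
    also have "\<dots> = (\<Sum>i = 0..<d. A $$ (i,k) * v $ i)"
      using v(1) k A_carrier by (simp add: scalar_prod_def)
    also have "\<dots> = (\<Sum>i = 0..<d. w (e i) * e i (t xi))"
      using k by (intro sum.cong refl) (simp add: A_entry w_def ix_e aut_inv_inv[OF t])
    also have "\<dots> = (\<Sum>s\<in>G. w s * s (t xi))" by (rule sumG)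
    finally show ?thesis by simp
  qed
  have r2: "\<forall>x. (\<Sum>s\<in>G. w s * s x) = 0"
  proof
    fix x
    obtain c where c: "x = (\<Sum>t\<in>G. of_rat (c t) * t xi)" using span by blast
    have "(\<Sum>s\<in>G. w s * s x) = (\<Sum>s\<in>G. \<Sum>t\<in>G. of_rat (c t) * (w s * s (t xi)))"
      unfolding c
    proof (intro sum.cong refl)
      fix s assume s: "s \<in> G"
      show "w s * s (\<Sum>t\<in>G. of_rat (c t) * t xi) = (\<Sum>t\<in>G. of_rat (c t) * (w s * s (t xi)))"
        unfolding aut_sum_rat[OF s] sum_distrib_left by (simp add: algebra_simps)
    qed
    also have "\<dots> = (\<Sum>t\<in>G. of_rat (c t) * (\<Sum>s\<in>G. w s * s (t xi)))"
      by (subst sum.swap) (simp add: sum_distrib_left)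
    also have "\<dots> = 0" using r1 by simp
    finally show "(\<Sum>s\<in>G. w s * s x) = 0" .
  qed
  have "\<forall>s\<in>G. w s = 0" by (rule dedekind[OF finG subset_refl r2])
  hence "v = 0\<^sub>v d" using v(1)
    by (intro eq_vecI) (auto simp: w_def, metis eG ix_e)
  with v(2) show False by simp
qed


definition B where "B = the (mat_inverse A)"
lemma B: "A * B = 1\<^sub>m d" "B * A = 1\<^sub>m d" "B \<in> carrier_mat d d"
proof -
  have "A \<in> Units (ring_mat TYPE('a) d undefined)"
    by (rule det_non_zero_imp_unit[OF A_carrier detA_nz])
  then obtain C where "mat_inverse A = Some C" using mat_inverse(1)[OF A_carrier] by fastforce
  then show "A * B = 1\<^sub>m d" "B * A = 1\<^sub>m d" "B \<in> carrier_mat d d"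
    using mat_inverse(2)[OF A_carrier] by (auto simp: B_def)
qed

lemma ddet_formula:
  "ddet_group d e u (\<lambda>s. s xi) = det A * (\<Sum>i = 0..<d. \<Sum>k = 0..<d. B $$ (i,k) * (if e k \<circ> iv (e i) = u then 1 else 0))"
proof -
  interpret cp: comm_ring_hom "\<lambda>x::'a. [:x:]"
    by unfold_locales (auto simp: one_pCons)
  define E where "E = mat d d (\<lambda>(i,k). if e i \<circ> iv (e k) = u then 1 else (0::'a))"
  define N where "N = B * E"
  define Q where "Q = mat d d (\<lambda>(i,k). [:(if i = k then 1 else 0), N $$ (i,k):])"
  define CA where "CA = map_mat (\<lambda>x. [:x:]) A"
  define M where "M = mat d d (\<lambda>(i,k). [: (e i \<circ> iv (e k)) xi :] + (if e i \<circ> iv (e k) = u then [:0,1:] else 0))"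
  have E: "E \<in> carrier_mat d d" by (simp add: E_def)
  have N: "N \<in> carrier_mat d d" using B(3) E by (simp add: N_def)
  have AN: "A * N = E" unfolding N_def
    using assoc_mult_mat[OF A_carrier B(3) E, symmetric] B(1) E by simp
  have Q: "Q \<in> carrier_mat d d" by (simp add: Q_def)
  have CA: "CA \<in> carrier_mat d d" using A_carrier by (simp add: CA_def)
  have MCQ: "M = CA * Q"
  proof (rule eq_matI)
    fix i k assume "i < dim_row (CA * Q)" "k < dim_col (CA * Q)"
    hence ik: "i < d" "k < d" using CA Q by auto
    have "(CA * Q) $$ (i,k) = (\<Sum>j = 0..<d. CA $$ (i,j) * Q $$ (j,k))"
      using ik CA Q by (simp add: scalar_prod_def)
    also have "\<dots> = (\<Sum>j = 0..<d. [:A $$ (i,j) * (if j = k then 1 else 0), A $$ (i,j) * N $$ (j,k):])"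
      by (intro sum.cong refl) (use ik A_carrier in \<open>simp add: CA_def Q_def\<close>)
    also have "\<dots> = [:(\<Sum>j = 0..<d. A $$ (i,j) * (if j = k then 1 else 0)), (\<Sum>j = 0..<d. A $$ (i,j) * N $$ (j,k)):]"
      by (rule sum_pCons2) simp
    also have "(\<Sum>j = 0..<d. A $$ (i,j) * (if j = k then 1 else 0)) = A $$ (i,k)"
      using ik by (simp add: if_distrib sum.delta' cong: if_cong)
    also have "(\<Sum>j = 0..<d. A $$ (i,j) * N $$ (j,k)) = (A * N) $$ (i,k)"
      using ik A_carrier N by (simp add: scalar_prod_def)
    also have "(A * N) $$ (i,k) = (if e i \<circ> iv (e k) = u then 1 else 0)"
      unfolding AN using ik by (simp add: E_def)
    also have "[:A $$ (i,k), (if e i \<circ> iv (e k) = u then 1 else 0):] = M $$ (i,k)"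
      using ik by (simp add: M_def A_entry)
    finally show "M $$ (i,k) = (CA * Q) $$ (i,k)" by simp
  qed (use A_carrier in \<open>auto simp: M_def CA_def Q_def\<close>)
  have "ddet_group d e u (\<lambda>s. s xi) = coeff (det M) 1"
    by (simp add: ddet_group_def M_def)
  also have "det M = det CA * det Q" unfolding MCQ by (rule det_mult[OF CA Q])
  also have "det CA = [:det A:]" unfolding CA_def by simp
  also have "coeff ([:det A:] * det Q) 1 = det A * coeff (det Q) 1" by simp
  also have "coeff (det Q) 1 = (\<Sum>i = 0..<d. N $$ (i,i))" unfolding Q_def by (rule coeff_det_lin[OF N])
  also have "\<dots> = (\<Sum>i = 0..<d. \<Sum>k = 0..<d. B $$ (i,k) * (if e k \<circ> iv (e i) = u then 1 else 0))"
    using B(3) by (intro sum.cong refl) (simp add: N_def E_def scalar_prod_def)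
  finally show ?thesis .
qed


definition y where "y t = B $$ (ix id, ix t)"

lemma right_bij: "g \<in> G \<Longrightarrow> bij_betw (\<lambda>s. s \<circ> g) G G"
  by (rule bij_betw_byWitness[of _ "\<lambda>s. s \<circ> iv g"])
     (auto simp: o_assoc[symmetric] aut_inv_l aut_inv_r aut_comp aut_inv)
lemma left_bij: "g \<in> G \<Longrightarrow> bij_betw (\<lambda>s. g \<circ> s) G G"
  by (rule bij_betw_byWitness[of _ "\<lambda>s. iv g \<circ> s"])
     (auto simp: o_assoc aut_inv_l aut_inv_r aut_comp aut_inv)
lemma inv_bij: "bij_betw iv G G"
  by (rule bij_betw_byWitness[of _ iv]) (auto simp: aut_inv_inv aut_inv)
lemma ix_bij: "bij_betw ix G {0..<d}"
proof -
  have "bij_betw ix G {..<d}" unfolding ix_def using order by (rule bij_betw_the_inv_into)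
  then show ?thesis by (simp add: atLeast0LessThan)
qed
lemma e_bij: "bij_betw e {0..<d} G" using order by (simp add: atLeast0LessThan)

lemma B_y: assumes "j < d" "k < d" shows "B $$ (j,k) = y (e k \<circ> iv (e j))"
proof -
  define g where "g = iv (e j)"
  have g: "g \<in> G" using aut_inv[OF eG[OF assms(1)]] by (simp add: g_def)
  define p where "p = (\<lambda>i. ix (e i \<circ> g))"
  have pb: "bij_betw p {0..<d} {0..<d}" unfolding p_def
    using bij_betw_trans[OF bij_betw_trans[OF e_bij right_bij[OF g]] ix_bij] by (simp add: o_def)
  have Ainv: "A $$ (p i, p k) = A $$ (i, k)" if "i < d" "k < d" for i k
  proof -
    have ig: "e i \<circ> g \<in> G" "e k \<circ> g \<in> G" using that g eG aut_comp by auto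
    have "A $$ (p i, p k) = (e i \<circ> g \<circ> iv (e k \<circ> g)) xi"
      unfolding p_def using ig by (simp add: A_entry ix_lt e_ix)
    also have "\<dots> = (e i \<circ> (g \<circ> iv g) \<circ> iv (e k)) xi"
      using g eG[OF that(2)] by (simp add: aut_inv_comp o_assoc)
    also have "\<dots> = A $$ (i,k)" using that g by (simp add: aut_inv_r A_entry)
    finally show ?thesis .
  qed
  have "B $$ (p j, p k) = B $$ (j, k)"
    by (rule perm_invariant_inverse[OF A_carrier B(3) B(1) B(2) pb Ainv assms])
  moreover have "p j = ix id" using assms by (simp add: p_def g_def aut_inv_r eG)
  moreover have "p k = ix (e k \<circ> iv (e j))" by (simp add: p_def g_def)
  ultimately show ?thesis by (simp add: y_def)
qed

lemma d_pos: "d > 0"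
proof -
  have "G \<noteq> {}" using aut_id by auto
  then show ?thesis using order by (auto simp: bij_betw_def)
qed

lemma count_one: assumes "u \<in> G" "i < d"
  shows "(\<Sum>k = 0..<d. if e k \<circ> iv (e i) = u then c else 0) = c"
proof -
  have ei: "e i \<in> G" using eG[OF assms(2)] .
  have uei: "u \<circ> e i \<in> G" using aut_comp[OF assms(1) ei] .
  have eq: "(e k \<circ> iv (e i) = u) \<longleftrightarrow> k = ix (u \<circ> e i)" if "k < d" for k
  proof
    assume h: "e k \<circ> iv (e i) = u"
    have "e k = e k \<circ> (iv (e i) \<circ> e i)" using ei by (simp add: aut_inv_l)
    also have "\<dots> = u \<circ> e i" using h by (simp add: o_assoc)
    finally have "e k = u \<circ> e i" .
    then show "k = ix (u \<circ> e i)" using that by (metis ix_e)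
  next
    assume "k = ix (u \<circ> e i)"
    hence "e k = u \<circ> e i" using uei by (simp add: e_ix)
    then show "e k \<circ> iv (e i) = u" using ei by (simp add: o_assoc[symmetric] aut_inv_r)
  qed
  have "(\<Sum>k = 0..<d. if e k \<circ> iv (e i) = u then c else 0) = (\<Sum>k = 0..<d. if k = ix (u \<circ> e i) then c else 0)"
    using eq by (intro sum.cong refl) auto
  also have "\<dots> = c" using ix_lt[OF uei] by simp
  finally show ?thesis .
qed

lemma partial_y: assumes u: "u \<in> G" shows "partial_xi d e u xi = det A * y u"
proof -
  have "ddet_group d e u (\<lambda>s. s xi) = det A * (\<Sum>i = 0..<d. \<Sum>k = 0..<d. if e k \<circ> iv (e i) = u then y u else 0)"
    unfolding ddet_formula
    by (intro arg_cong[where f="\<lambda>x. det A * x"] sum.cong refl) (auto simp: B_y)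
  also have "\<dots> = det A * (\<Sum>i = 0..<d. y u)"
    by (intro arg_cong[where f="\<lambda>x. det A * x"] sum.cong refl) (simp add: count_one[OF u])
  also have "\<dots> = det A * y u * of_nat d" by simp
  finally show ?thesis using d_pos by (simp add: partial_xi_def)
qed


lemma conj_sum:
  assumes KG: "K \<subseteq> G" and Kc: "\<forall>s\<in>G. \<forall>t\<in>K. s \<circ> t \<circ> iv s \<in> K" and s: "s \<in> G"
  shows "(\<Sum>\<sigma>\<in>K. f (\<sigma> \<circ> s)) = (\<Sum>t\<in>K. f (s \<circ> t))"
proof -
  have ivs: "iv s \<in> G" using aut_inv[OF s] .
  have c1: "s \<circ> (iv s \<circ> a \<circ> s) \<circ> iv s = a" for a
    using s by (simp add: o_assoc[symmetric] aut_inv_r) (simp add: o_assoc aut_inv_r)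
  have c2: "iv s \<circ> (s \<circ> a \<circ> iv s) \<circ> s = a" for a
    using s by (simp add: o_assoc[symmetric] aut_inv_l) (simp add: o_assoc aut_inv_l)
  have c3: "a \<in> K \<Longrightarrow> iv s \<circ> a \<circ> s \<in> K" for a using Kc ivs by (metis aut_inv_inv s)
  have c4: "a \<in> K \<Longrightarrow> s \<circ> a \<circ> iv s \<in> K" for a using Kc s by blast
  have c5: "s \<circ> (iv s \<circ> a \<circ> s) = a \<circ> s" for a
    using s by (simp add: o_assoc aut_inv_r)
  have c6: "a \<circ> s \<circ> iv s = a" "a \<circ> iv s \<circ> s = a" for a
    using s by (simp_all add: o_assoc[symmetric] aut_inv_r aut_inv_l)
  show ?thesis
    by (rule sum.reindex_bij_witness[of _ "\<lambda>t. s \<circ> t \<circ> iv s" "\<lambda>t. iv s \<circ> t \<circ> s"])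
       (auto simp: c1 c2 c3 c4 c5 c6)
qed

lemma part1_init:
  assumes KG: "K \<subseteq> G" and Kc: "\<forall>s\<in>G. \<forall>t\<in>K. s \<circ> t \<circ> iv s \<in> K" and i: "i < d"
  shows "(P_mat d e xi * the (mat_inverse A) *\<^sub>v kappa_col d e K) $ i
     = (\<Sum>s\<in>G. \<Sum>t\<in>K. s (xi ^ i) * partial_xi d e (s \<circ> t) xi) / det A"
proof -
  let ?P = "P_mat d e xi"
  have P: "?P \<in> carrier_mat d d" by (simp add: P_mat_def)
  have "(?P * the (mat_inverse A) *\<^sub>v kappa_col d e K) $ i
      = (\<Sum>j = 0..<d. ?P $$ (i,j) * (\<Sum>k = 0..<d. B $$ (j,k) * (if e k \<in> K then 1 else 0)))"
    unfolding B_def[symmetric] using P B(3) i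
    by (simp add: scalar_prod_def kappa_col_def)
  also have "\<dots> = (\<Sum>j = 0..<d. \<Sum>k = 0..<d. iv (e j) (xi ^ i) * y (e k \<circ> iv (e j)) * (if e k \<in> K then 1 else 0))"
    using i by (intro sum.cong refl) (simp add: sum_distrib_left P_mat_def B_y mult.assoc)
  also have "\<dots> = (\<Sum>\<rho>\<in>G. \<Sum>\<sigma>\<in>G. iv \<rho> (xi ^ i) * y (\<sigma> \<circ> iv \<rho>) * (if \<sigma> \<in> K then 1 else 0))"
  proof -
    define H where "H = (\<lambda>\<rho> \<sigma>. iv \<rho> (xi ^ i) * y (\<sigma> \<circ> iv \<rho>) * (if \<sigma> \<in> K then 1 else (0::'a)))"
    have "(\<Sum>j = 0..<d. \<Sum>k = 0..<d. H (e j) (e k)) = (\<Sum>j = 0..<d. \<Sum>\<sigma>\<in>G. H (e j) \<sigma>)"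
      by (intro sum.cong refl) (rule sumG)
    also have "\<dots> = (\<Sum>\<rho>\<in>G. \<Sum>\<sigma>\<in>G. H \<rho> \<sigma>)" by (rule sumG)
    finally show ?thesis by (simp only: H_def)
  qed
  also have "\<dots> = (\<Sum>\<rho>\<in>G. \<Sum>\<sigma>\<in>K. iv \<rho> (xi ^ i) * y (\<sigma> \<circ> iv \<rho>))"
  proof (rule sum.cong[OF refl])
    fix \<rho> assume "\<rho> \<in> G"
    have "(\<Sum>\<sigma>\<in>G. iv \<rho> (xi ^ i) * y (\<sigma> \<circ> iv \<rho>) * (if \<sigma> \<in> K then 1 else 0))
        = (\<Sum>\<sigma>\<in>G. if \<sigma> \<in> K then iv \<rho> (xi ^ i) * y (\<sigma> \<circ> iv \<rho>) else 0)"
      by (intro sum.cong refl) auto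
    also have "\<dots> = (\<Sum>\<sigma>\<in>G \<inter> K. iv \<rho> (xi ^ i) * y (\<sigma> \<circ> iv \<rho>))"
      using finG by (simp add: sum.inter_restrict)
    also have "\<dots> = (\<Sum>\<sigma>\<in>K. iv \<rho> (xi ^ i) * y (\<sigma> \<circ> iv \<rho>))" using KG by (simp add: Int_absorb1)
    finally show "(\<Sum>\<sigma>\<in>G. iv \<rho> (xi ^ i) * y (\<sigma> \<circ> iv \<rho>) * (if \<sigma> \<in> K then 1 else 0))
        = (\<Sum>\<sigma>\<in>K. iv \<rho> (xi ^ i) * y (\<sigma> \<circ> iv \<rho>))" .
  qed
  also have "\<dots> = (\<Sum>s\<in>G. \<Sum>\<sigma>\<in>K. s (xi ^ i) * y (\<sigma> \<circ> s))"
    using sum.reindex_bij_betw[OF inv_bij, of "\<lambda>s. \<Sum>\<sigma>\<in>K. s (xi ^ i) * y (\<sigma> \<circ> s)"] by simp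
  also have "\<dots> = (\<Sum>s\<in>G. \<Sum>t\<in>K. s (xi ^ i) * y (s \<circ> t))"
  proof (rule sum.cong[OF refl])
    fix s assume s: "s \<in> G"
    show "(\<Sum>\<sigma>\<in>K. s (xi ^ i) * y (\<sigma> \<circ> s)) = (\<Sum>t\<in>K. s (xi ^ i) * y (s \<circ> t))"
      using conj_sum[OF KG Kc s, of "\<lambda>u. s (xi ^ i) * y u"] .
  qed
  also have "\<dots> = (\<Sum>s\<in>G. \<Sum>t\<in>K. s (xi ^ i) * partial_xi d e (s \<circ> t) xi) / det A"
  proof -
    have "(\<Sum>s\<in>G. \<Sum>t\<in>K. s (xi ^ i) * partial_xi d e (s \<circ> t) xi)
        = det A * (\<Sum>s\<in>G. \<Sum>t\<in>K. s (xi ^ i) * y (s \<circ> t))"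
      unfolding sum_distrib_left
      by (intro sum.cong refl) (use KG in \<open>auto simp: partial_y aut_comp\<close>)
    then show ?thesis using detA_nz by simp
  qed
  finally show ?thesis .
qed


end
context gs begin
lemma aut_poly: assumes r: "r \<in> G"
  shows "r (poly (map_poly of_rat p) x) = poly (map_poly of_rat p) (r x)"
proof -
  interpret field_hom r by (rule aut_fh[OF r])
  have "r (poly (map_poly of_rat p) x) = (\<Sum>i\<le>degree (map_poly of_rat p :: 'a poly). r (coeff (map_poly of_rat p) i) * r x ^ i)"
    unfolding poly_altdef hom_sum hom_mult hom_power ..
  also have "\<dots> = poly (map_poly of_rat p) (r x)"
    unfolding poly_altdef by (intro sum.cong refl) (simp add: coeff_map_poly aut_of_rat[OF r])
  finally show ?thesis .
qed

lemma xi_inj: assumes "r \<in> G" "r' \<in> G" "r xi = r' xi" shows "r = r'"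
proof
  fix x
  obtain p where "x = poly (map_poly of_rat p) xi" using gen by blast
  then show "r x = r' x" using assms by (simp add: aut_poly)
qed

lemma inj_exi: "inj_on (\<lambda>i. e i xi) {0..<d}"
proof (rule inj_onI)
  fix i j assume ij: "i \<in> {0..<d}" "j \<in> {0..<d}" "e i xi = e j xi"
  hence "e i = e j" using xi_inj[OF eG eG] by auto
  then show "i = j" using ij e_inj by auto
qed

definition pi where "pi s = (\<lambda>i. if i < d then ix (s \<circ> e i) else i)"

lemma pi_permutes: assumes s: "s \<in> G" shows "pi s permutes {0..<d}"
proof (rule bij_imp_permutes)
  have "bij_betw (\<lambda>i. ix (s \<circ> e i)) {0..<d} {0..<d}"
    using bij_betw_trans[OF bij_betw_trans[OF e_bij left_bij[OF s]] ix_bij] by (simp add: o_def)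
  then show "bij_betw (pi s) {0..<d} {0..<d}"
    by (rule bij_betw_cong[THEN iffD1, rotated]) (simp add: pi_def)
qed (simp add: pi_def)

lemma e_pi: "s \<in> G \<Longrightarrow> i < d \<Longrightarrow> e (pi s i) = s \<circ> e i"
  by (simp add: pi_def e_ix aut_comp eG)
lemma pi_lt: "s \<in> G \<Longrightarrow> i < d \<Longrightarrow> pi s i < d"
  by (simp add: pi_def ix_lt aut_comp eG)

lemma root_perm_map: assumes s: "s \<in> G"
  shows "root_perm G xi s = map_permutation {0..<d} (\<lambda>i. e i xi) (pi s)"
proof (rule ext)
  fix z
  have img: "(\<lambda>i. e i xi) ` {0..<d} = (\<lambda>r. r xi) ` G"
  proof -
    have eG': "e ` {0..<d} = G" using e_bij by (simp add: bij_betw_def)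
    have "(\<lambda>i. e i xi) ` {0..<d} = (\<lambda>r. r xi) ` (e ` {0..<d})" by (simp add: image_image)
    then show ?thesis unfolding eG' .
  qed
  show "root_perm G xi s z = map_permutation {0..<d} (\<lambda>i. e i xi) (pi s) z"
  proof (cases "z \<in> (\<lambda>r. r xi) ` G")
    case True
    then obtain r where r: "r \<in> G" "z = r xi" by blast
    define i where "i = ix r"
    have i: "i < d" "e i = r" using r by (auto simp: i_def ix_lt e_ix)
    have "map_permutation {0..<d} (\<lambda>i. e i xi) (pi s) (e i xi) = e (pi s i) xi"
      by (rule map_permutation_apply[OF inj_exi]) (use i in simp)
    also have "\<dots> = s (e i xi)" using e_pi[OF s i(1)] by simp
    finally have "map_permutation {0..<d} (\<lambda>i. e i xi) (pi s) z = s z" using i r by simp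
    moreover have "root_perm G xi s z = s z" using True by (simp add: root_perm_def)
    ultimately show ?thesis by simp
  next
    case False
    have nz: "z \<notin> (\<lambda>i. e i xi) ` {0..<d}" using False unfolding img .
    have "root_perm G xi s z = z" using False by (simp add: root_perm_def)
    moreover have "map_permutation {0..<d} (\<lambda>i. e i xi) (pi s) z = z"
      using nz unfolding map_permutation_def restrict_id_def by simp
    ultimately show ?thesis by simp
  qed
qed

lemma evenperm_root: assumes s: "s \<in> G"
  shows "evenperm (root_perm G xi s) = evenperm (pi s)"
proof -
  have inj: "inj_on (\<lambda>i. e i xi) {0..<d}"
    by (rule inj_exi)
  show ?thesis unfolding root_perm_map[OF s]
    by (rule evenperm_map_permutation[OF inj pi_permutes[OF s]]) simp
qed

lemma root_perm_permutation: assumes s: "s \<in> G" shows "permutation (root_perm G xi s)"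
proof -
  have inj: "inj_on (\<lambda>i. e i xi) {0..<d}"
    by (rule inj_exi)
  have "root_perm G xi s permutes (\<lambda>i. e i xi) ` {0..<d}"
    unfolding root_perm_map[OF s]
    by (rule map_permutation_permutes[OF inj_on_imp_bij_betw[OF inj] pi_permutes[OF s]])
  then show ?thesis using permutes_imp_permutation by blast
qed

definition sg where "sg s = (if evenperm (root_perm G xi s) then 1 else (-1::'a))"

lemma aut_det: assumes s: "s \<in> G" shows "s (det A) = sg s * det A"
proof -
  interpret field_hom s by (rule aut_fh[OF s])
  have "map_mat s A = mat d d (\<lambda>(i,k). A $$ (pi s i, k))"
    using A_carrier
    by (intro eq_matI) (auto simp: A_entry pi_lt[OF s] e_pi[OF s])
  hence "det (map_mat s A) = signof (pi s) * det A"
    using det_permute_rows[OF A_carrier pi_permutes[OF s]] by simp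
  hence "s (det A) = signof (pi s) * det A" unfolding hom_det .
  then show ?thesis by (simp add: sg_def sign_def evenperm_root[OF s])
qed

lemma aut_B: assumes s: "s \<in> G" and k: "k < d" and j: "j < d"
  shows "s (B $$ (k,j)) = B $$ (k, pi s j)"
proof -
  interpret field_hom s by (rule aut_fh[OF s])
  let ?A' = "map_mat s A"
  let ?B'' = "mat d d (\<lambda>(k,j). B $$ (k, pi s j))"
  have A': "?A' \<in> carrier_mat d d" using A_carrier by simp
  have pb: "bij_betw (pi s) {0..<d} {0..<d}" using pi_permutes[OF s] by (rule permutes_imp_bij)
  have rel: "?A' $$ (i, k) = A $$ (pi s i, k)" if "i < d" "k < d" for i k
    using that A_carrier by (simp add: A_entry pi_lt[OF s] e_pi[OF s])
  have AB'': "?A' * ?B'' = 1\<^sub>m d"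
    by (rule rowperm_inverse[OF A_carrier B(3) B(1) A' pb rel])
  have B''A': "?B'' * ?A' = 1\<^sub>m d"
    by (rule mat_mult_left_right_inverse[OF A' _ AB'']) simp
  have "?A' * map_mat s B = map_mat s (A * B)"
    using mat_hom_mult[OF A_carrier B(3)] by simp
  also have "\<dots> = 1\<^sub>m d" using B(1) mat_hom_one by simp
  finally have "map_mat s B = ?B''"
    by (intro inv_unique_mat[OF A' _ _ B''A']) (use B(3) in auto)
  then have "map_mat s B $$ (k,j) = ?B'' $$ (k,j)" by simp
  then show ?thesis using k j B(3) by simp
qed

lemma aut_partial: assumes s: "s \<in> G" and u: "u \<in> G"
  shows "s (partial_xi d e u xi) = sg s * partial_xi d e (s \<circ> u) xi"
proof -
  interpret field_hom s by (rule aut_fh[OF s])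
  have su: "s \<circ> u \<in> G" using aut_comp[OF s u] .
  have "s (y u) = y (s \<circ> u)"
    unfolding y_def using aut_B[OF s ix_lt[OF aut_id] ix_lt[OF u]]
    by (simp add: pi_def ix_lt[OF u] e_ix[OF u])
  then have "s (det A * y u) = sg s * (det A * y (s \<circ> u))"
    using hom_mult[of "det A" "y u"] aut_det[OF s] by simp
  then show ?thesis
    by (simp only: partial_y[OF u] partial_y[OF su])
qed

end
context gs begin

lemma lin_rec:
  fixes r :: "('a \<Rightarrow> 'a) \<Rightarrow> 'a" and W :: "('a \<Rightarrow> 'a) \<Rightarrow> 'a" and c :: "nat \<Rightarrow> 'a"
  assumes h: "\<forall>s\<in>G. (r s) ^ d = - (\<Sum>k<d. c k * (r s) ^ k)"
  shows "(\<Sum>s\<in>G. r s ^ (n + d) * W s) = - (\<Sum>k<d. c k * (\<Sum>s\<in>G. r s ^ (n + k) * W s))"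
proof -
  have "(\<Sum>s\<in>G. r s ^ (n + d) * W s) = (\<Sum>s\<in>G. - (\<Sum>k<d. c k * (r s ^ (n + k) * W s)))"
  proof (rule sum.cong[OF refl])
    fix s assume s: "s \<in> G"
    have "r s ^ (n + d) * W s = r s ^ n * W s * r s ^ d" by (simp add: power_add algebra_simps)
    also have "\<dots> = r s ^ n * W s * (- (\<Sum>k<d. c k * (r s) ^ k))" using h s by simp
    also have "\<dots> = - (\<Sum>k<d. c k * (r s ^ (n + k) * W s))"
      by (simp add: sum_distrib_left power_add algebra_simps)
    finally show "r s ^ (n + d) * W s = - (\<Sum>k<d. c k * (r s ^ (n + k) * W s))" .
  qed
  also have "\<dots> = - (\<Sum>k<d. \<Sum>s\<in>G. c k * (r s ^ (n + k) * W s))"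
    by (simp add: sum_negf sum.swap[of _ G])
  also have "\<dots> = - (\<Sum>k<d. c k * (\<Sum>s\<in>G. r s ^ (n + k) * W s))"
    by (simp add: sum_distrib_left)
  finally show ?thesis .
qed

lemma root_pow:
  fixes F :: "int poly"
  assumes deg: "degree F = d" and monic: "lead_coeff F = 1"
    and root: "poly (map_poly of_int F) xi = 0" and s: "s \<in> G"
  shows "(s xi) ^ d = - (\<Sum>k<d. of_int (coeff F k) * (s xi) ^ k)"
proof -
  interpret field_hom s by (rule aut_fh[OF s])
  have dm: "degree (map_poly (of_int :: int \<Rightarrow> 'a) F) = d"
    using deg monic by (subst map_poly_degree_eq) auto
  have "0 = (\<Sum>k\<le>d. of_int (coeff F k) * xi ^ k)"
    using root unfolding poly_altdef dm by (simp add: coeff_map_poly)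
  also have "\<dots> = (\<Sum>k<d. of_int (coeff F k) * xi ^ k) + xi ^ d"
    using monic deg by (simp add: lessThan_Suc_atMost[symmetric])
  finally have x: "xi ^ d = - (\<Sum>k<d. of_int (coeff F k) * xi ^ k)"
    by (simp add: eq_neg_iff_add_eq_0 add.commute)
  have "s (xi ^ d) = s (- (\<Sum>k<d. of_int (coeff F k) * xi ^ k))" using x by simp
  then show ?thesis unfolding hom_uminus hom_sum hom_mult hom_power hom_of_int .
qed

lemma part1_all:
  fixes F :: "int poly" and a :: "nat \<Rightarrow> 'a"
  assumes KG: "K \<subseteq> G" and Kc: "\<forall>s\<in>G. \<forall>t\<in>K. s \<circ> t \<circ> iv s \<in> K"
    and deg: "degree F = d" and monic: "lead_coeff F = 1"
    and root: "poly (map_poly of_int F) xi = 0"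
    and init: "\<forall>i<d. a i = (P_mat d e xi * the (mat_inverse A) *\<^sub>v kappa_col d e K) $ i"
    and recur: "\<forall>n. a (n + d) = - (\<Sum>k<d. of_int (coeff F k) * a (n + k))"
  shows "\<forall>i. a i = (\<Sum>s\<in>G. \<Sum>t\<in>K. s (xi ^ i) * partial_xi d e (s \<circ> t) xi) / det A"
proof
  define W where "W = (\<lambda>s. (\<Sum>t\<in>K. partial_xi d e (s \<circ> t) xi) / det A)"
  define b where "b = (\<lambda>i. (\<Sum>s\<in>G. (s xi) ^ i * W s))"
  have bi: "(\<Sum>s\<in>G. \<Sum>t\<in>K. s (xi ^ i) * partial_xi d e (s \<circ> t) xi) / det A = b i" for i
  proof -
    have "(\<Sum>s\<in>G. \<Sum>t\<in>K. s (xi ^ i) * partial_xi d e (s \<circ> t) xi) / det A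
        = (\<Sum>s\<in>G. s (xi ^ i) * W s)"
      unfolding sum_divide_distrib W_def sum_distrib_left by (simp add: times_divide_eq_right)
    also have "\<dots> = b i" unfolding b_def
    proof (rule sum.cong[OF refl])
      fix s assume s: "s \<in> G"
      interpret field_hom s by (rule aut_fh[OF s])
      show "s (xi ^ i) * W s = (s xi) ^ i * W s" by (simp only: hom_power)
    qed
    finally show ?thesis .
  qed
  have brec: "b (n + d) = - (\<Sum>k<d. of_int (coeff F k) * b (n + k))" for n
    unfolding b_def by (rule lin_rec) (use root_pow[OF deg monic root] in blast)
  fix i
  show "a i = (\<Sum>s\<in>G. \<Sum>t\<in>K. s (xi ^ i) * partial_xi d e (s \<circ> t) xi) / det A"
    unfolding bi
  proof (induction i rule: less_induct)
    case (less i)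
    show ?case
    proof (cases "i < d")
      case True
      then show ?thesis using init part1_init[OF KG Kc True] bi by simp
    next
      case False
      define n where "n = i - d"
      have i: "i = n + d" using False by (simp add: n_def)
      have "a i = - (\<Sum>k<d. of_int (coeff F k) * a (n + k))" using recur i by simp
      also have "\<dots> = - (\<Sum>k<d. of_int (coeff F k) * b (n + k))"
        using less.IH i by (intro arg_cong[where f=uminus] sum.cong refl) auto
      also have "\<dots> = b i" using brec i by simp
      finally show ?thesis .
    qed
  qed
qed

lemma sg_sq: "sg s * sg s = 1" by (simp add: sg_def)

lemma signed_trace:
  assumes KG: "K \<subseteq> G"
  shows "(\<Sum>s\<in>G. sg s * s (xi ^ i * (\<Sum>t\<in>K. partial_xi d e t xi)))
       = (\<Sum>s\<in>G. \<Sum>t\<in>K. s (xi ^ i) * partial_xi d e (s \<circ> t) xi)"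
proof (rule sum.cong[OF refl])
  fix s assume s: "s \<in> G"
  interpret field_hom s by (rule aut_fh[OF s])
  have "s (xi ^ i * (\<Sum>t\<in>K. partial_xi d e t xi)) = s (xi ^ i) * (\<Sum>t\<in>K. s (partial_xi d e t xi))"
    unfolding hom_mult hom_sum ..
  also have "\<dots> = s (xi ^ i) * (\<Sum>t\<in>K. sg s * partial_xi d e (s \<circ> t) xi)"
    using KG by (intro arg_cong[where f="\<lambda>x. s (xi ^ i) * x"] sum.cong refl) (auto simp: aut_partial[OF s])
  finally have "sg s * s (xi ^ i * (\<Sum>t\<in>K. partial_xi d e t xi))
      = (sg s * sg s) * (\<Sum>t\<in>K. s (xi ^ i) * partial_xi d e (s \<circ> t) xi)"
    by (simp add: sum_distrib_left algebra_simps)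
  then show "sg s * s (xi ^ i * (\<Sum>t\<in>K. partial_xi d e t xi)) = (\<Sum>t\<in>K. s (xi ^ i) * partial_xi d e (s \<circ> t) xi)"
    by (simp add: sg_sq)
qed

lemma all_even_trace:
  assumes ev: "\<forall>s\<in>G. evenperm (root_perm G xi s)"
  shows "trace_on G z = (\<Sum>s\<in>G. sg s * s z)"
  unfolding trace_on_def using ev by (intro sum.cong refl) (simp add: sg_def)

lemma split_trace:
  assumes dG: "delta \<in> G"
    and GE: "G = even_part G xi \<union> (\<lambda>h. delta \<circ> h) ` even_part G xi"
    and disj: "even_part G xi \<inter> (\<lambda>h. delta \<circ> h) ` even_part G xi = {}"
  shows "trace_on (even_part G xi) z - delta (trace_on (even_part G xi) z) = (\<Sum>s\<in>G. sg s * s z)"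
proof -
  let ?E = "even_part G xi"
  interpret field_hom delta by (rule aut_fh[OF dG])
  have EG: "?E \<subseteq> G" by (auto simp: even_part_def)
  have finE: "finite ?E" using finG EG finite_subset by blast
  have idE: "id \<in> ?E"
  proof -
    have "root_perm G xi id = id" by (auto simp: root_perm_def)
    then show ?thesis using aut_id by (simp add: even_part_def)
  qed
  have dnot: "delta \<notin> ?E"
  proof
    assume "delta \<in> ?E"
    moreover have "delta \<in> (\<lambda>h. delta \<circ> h) ` ?E" by (rule rev_image_eqI[OF idE]) simp
    ultimately show False using disj by blast
  qed
  hence dodd: "\<not> evenperm (root_perm G xi delta)" using dG by (simp add: even_part_def)
  have rp_comp: "root_perm G xi (delta \<circ> h) = root_perm G xi delta \<circ> root_perm G xi h" if h: "h \<in> G" for h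
  proof
    fix z
    show "root_perm G xi (delta \<circ> h) z = (root_perm G xi delta \<circ> root_perm G xi h) z"
    proof (cases "z \<in> (\<lambda>r. r xi) ` G")
      case True
      then obtain r where r: "r \<in> G" "z = r xi" by blast
      have "h z = (h \<circ> r) xi" using r by simp
      hence "h z \<in> (\<lambda>r. r xi) ` G" using aut_comp[OF h r(1)] by blast
      then show ?thesis using True by (simp add: root_perm_def)
    next
      case False
      then show ?thesis by (simp add: root_perm_def)
    qed
  qed
  have sg_odd: "sg (delta \<circ> h) = -1" if h: "h \<in> ?E" for h
  proof -
    have hG: "h \<in> G" and hev: "evenperm (root_perm G xi h)" using h by (auto simp: even_part_def)
    have "evenperm (root_perm G xi (delta \<circ> h)) = (evenperm (root_perm G xi delta) = evenperm (root_perm G xi h))"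
      unfolding rp_comp[OF hG]
      by (rule evenperm_comp[OF root_perm_permutation[OF dG] root_perm_permutation[OF hG]])
    then show ?thesis using dodd hev by (simp add: sg_def)
  qed
  have sg_ev: "sg h = 1" if "h \<in> ?E" for h using that by (simp add: sg_def even_part_def)
  have injd: "inj_on (\<lambda>h. delta \<circ> h) ?E"
  proof (rule inj_onI)
    fix h h' assume "delta \<circ> h = delta \<circ> h'"
    hence "iv delta \<circ> (delta \<circ> h) = iv delta \<circ> (delta \<circ> h')" by simp
    thus "h = h'" using dG by (simp add: o_assoc aut_inv_l)
  qed
  have "(\<Sum>s\<in>G. sg s * s z) = (\<Sum>s\<in>?E. sg s * s z) + (\<Sum>s\<in>(\<lambda>h. delta \<circ> h) ` ?E. sg s * s z)"
    using finE disj by (subst GE) (simp add: sum.union_disjoint)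
  also have "(\<Sum>s\<in>?E. sg s * s z) = trace_on ?E z"
    unfolding trace_on_def by (intro sum.cong refl) (simp add: sg_ev)
  also have "(\<Sum>s\<in>(\<lambda>h. delta \<circ> h) ` ?E. sg s * s z) = (\<Sum>h\<in>?E. sg (delta \<circ> h) * (delta \<circ> h) z)"
    using sum.reindex[OF injd, of "\<lambda>s. sg s * s z"] by (simp add: o_def)
  also have "\<dots> = - (\<Sum>h\<in>?E. delta (h z))"
    by (simp add: sg_odd sum_negf)
  also have "(\<Sum>h\<in>?E. delta (h z)) = delta (trace_on ?E z)"
    unfolding trace_on_def hom_sum ..
  finally show ?thesis by simp
qed

end

lemma main_aux:
  fixes F :: "int poly" and xi :: "'a::field_char_0"
    and e :: "nat \<Rightarrow> 'a \<Rightarrow> 'a" and K :: "('a \<Rightarrow> 'a) set" and tau0 :: "'a \<Rightarrow> 'a"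
    and a :: "nat \<Rightarrow> 'a" and d :: nat
  assumes deg: "degree F = d"
    and monic: "lead_coeff F = 1"
    and root: "poly (map_poly of_int F) xi = 0"
    and gen: "\<forall>x::'a. \<exists>p::rat poly. x = poly (map_poly of_rat p) xi"
    and order: "bij_betw e {..<d} field_auts"
    and nb: "normal_basis field_auts xi"
    and tau0: "tau0 \<in> field_auts"
    and K: "K = {r \<circ> tau0 \<circ> inv_into UNIV r | r. r \<in> field_auts}"
    and init: "\<forall>i<d. a i = (P_mat d e xi * the (mat_inverse (Gamma_xi d e xi)) *\<^sub>v kappa_col d e K) $ i"
    and recur: "\<forall>n. a (n + d) = - (\<Sum>k<d. of_int (coeff F k) * a (n + k))"
  shows "(\<forall>i. a i = (\<Sum>s\<in>field_auts. \<Sum>t\<in>K. s (xi ^ i) * partial_xi d e (s \<circ> t) xi)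
                       / det (Gamma_xi d e xi))
       \<and> ((\<forall>s\<in>field_auts. evenperm (root_perm field_auts xi s)) \<longrightarrow>
           (\<forall>i. a i = trace_on field_auts (xi ^ i * (\<Sum>t\<in>K. partial_xi d e t xi)) / det (Gamma_xi d e xi)))
       \<and> (\<forall>delta. \<not> (\<forall>s\<in>field_auts. evenperm (root_perm field_auts xi s)) \<longrightarrow> delta \<in> field_auts \<longrightarrow>
           field_auts = even_part field_auts xi \<union> (\<lambda>h. delta \<circ> h) ` even_part field_auts xi \<longrightarrow>
           even_part field_auts xi \<inter> (\<lambda>h. delta \<circ> h) ` even_part field_auts xi = {} \<longrightarrow>
           (\<forall>i. a i = (trace_on (even_part field_auts xi) (xi ^ i * (\<Sum>t\<in>K. partial_xi d e t xi))
                       - delta (trace_on (even_part field_auts xi) (xi ^ i * (\<Sum>t\<in>K. partial_xi d e t xi))))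
                       / det (Gamma_xi d e xi)))"
proof -
  have span: "\<forall>x. \<exists>c::('a\<Rightarrow>'a)\<Rightarrow>rat. x = (\<Sum>s\<in>field_auts. of_rat (c s) * s xi)"
    using nb by (simp add: normal_basis_def)
  interpret gs d e xi by unfold_locales (use order span gen in auto)
  have KG: "K \<subseteq> G" using K tau0 by (auto intro!: aut_comp aut_inv)
  have Kc: "\<forall>s\<in>G. \<forall>t\<in>K. s \<circ> t \<circ> iv s \<in> K"
  proof (intro ballI)
    fix s t assume s: "s \<in> G" and t: "t \<in> K"
    then obtain r where r: "r \<in> G" "t = r \<circ> tau0 \<circ> iv r" using K by auto
    have "s \<circ> t \<circ> iv s = (s \<circ> r) \<circ> tau0 \<circ> iv (s \<circ> r)"
      using r s by (simp add: aut_inv_comp o_assoc)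
    moreover have "s \<circ> r \<in> G" using aut_comp[OF s r(1)] .
    ultimately show "s \<circ> t \<circ> iv s \<in> K" using K by blast
  qed
  have P1: "\<forall>i. a i = (\<Sum>s\<in>G. \<Sum>t\<in>K. s (xi ^ i) * partial_xi d e (s \<circ> t) xi) / det A"
    by (rule part1_all[OF KG Kc deg monic root init recur])
  have P2: "\<forall>i. a i = trace_on G (xi ^ i * (\<Sum>t\<in>K. partial_xi d e t xi)) / det A"
    if ev: "\<forall>s\<in>G. evenperm (root_perm G xi s)"
  proof
    fix i
    show "a i = trace_on G (xi ^ i * (\<Sum>t\<in>K. partial_xi d e t xi)) / det A"
      unfolding all_even_trace[OF ev] signed_trace[OF KG] using P1 by simp
  qed
  have P3: "\<forall>i. a i = (trace_on (even_part G xi) (xi ^ i * (\<Sum>t\<in>K. partial_xi d e t xi))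
                       - delta (trace_on (even_part G xi) (xi ^ i * (\<Sum>t\<in>K. partial_xi d e t xi))))
                       / det A"
    if dG: "delta \<in> G" and GE: "G = even_part G xi \<union> (\<lambda>h. delta \<circ> h) ` even_part G xi"
      and disj: "even_part G xi \<inter> (\<lambda>h. delta \<circ> h) ` even_part G xi = {}" for delta
  proof
    fix i
    show "a i = (trace_on (even_part G xi) (xi ^ i * (\<Sum>t\<in>K. partial_xi d e t xi))
                       - delta (trace_on (even_part G xi) (xi ^ i * (\<Sum>t\<in>K. partial_xi d e t xi))))
                       / det A"
      unfolding split_trace[OF dG GE disj] signed_trace[OF KG] using P1 by simp
  qed
  show ?thesis using P1 P2 P3 by blast
qed

theorem theorem1p2:
  fixes F :: "int poly" and xi :: "'a::field_char_0"
    and e :: "nat \<Rightarrow> 'a \<Rightarrow> 'a" and K :: "('a \<Rightarrow> 'a) set" and tau0 :: "'a \<Rightarrow> 'a"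
    and a :: "nat \<Rightarrow> 'a"
  defines "d \<equiv> degree F" and "G \<equiv> (field_auts :: ('a \<Rightarrow> 'a) set)"
  assumes monic: "lead_coeff F = 1"
    and irr: "irreducible F"
    and root: "poly (map_poly of_int F) xi = 0"
    and gen: "\<forall>x::'a. \<exists>p::rat poly. x = poly (map_poly of_rat p) xi"
    and galois: "card G = d"
    and order: "bij_betw e {..<d} G"
    and nb: "normal_basis G xi"
    and tau0: "tau0 \<in> G"
    and K: "K = {r \<circ> tau0 \<circ> inv_into UNIV r | r. r \<in> G}"
    and init: "\<forall>i<d. a i = (P_mat d e xi * the (mat_inverse (Gamma_xi d e xi)) *\<^sub>v kappa_col d e K) $ i"
    and recur: "\<forall>n. a (n + d) = - (\<Sum>k<d. of_int (coeff F k) * a (n + k))"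
  shows "(\<forall>i. a i = (\<Sum>s\<in>G. \<Sum>t\<in>K. s (xi ^ i) * partial_xi d e (s \<circ> t) xi)
                       / det (Gamma_xi d e xi))
       \<and> ((\<forall>s\<in>G. evenperm (root_perm G xi s)) \<longrightarrow>
           (\<forall>i. a i = trace_on G (xi ^ i * (\<Sum>t\<in>K. partial_xi d e t xi)) / det (Gamma_xi d e xi)))
       \<and> (\<forall>delta. \<not> (\<forall>s\<in>G. evenperm (root_perm G xi s)) \<longrightarrow> delta \<in> G \<longrightarrow>
           G = even_part G xi \<union> (\<lambda>h. delta \<circ> h) ` even_part G xi \<longrightarrow>
           even_part G xi \<inter> (\<lambda>h. delta \<circ> h) ` even_part G xi = {} \<longrightarrow>
           (\<forall>i. a i = (trace_on (even_part G xi) (xi ^ i * (\<Sum>t\<in>K. partial_xi d e t xi))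
                       - delta (trace_on (even_part G xi) (xi ^ i * (\<Sum>t\<in>K. partial_xi d e t xi))))
                       / det (Gamma_xi d e xi)))"
proof -
  have deg: "degree F = d" by (simp add: d_def)
  show ?thesis unfolding G_def
  by (rule main_aux[OF deg monic root gen order[unfolded G_def] nb[unfolded G_def]
        tau0[unfolded G_def] K[unfolded G_def] init recur])
qed

end
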